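(* Let $R\subseteq S$ be a module-finite inclusion of normal $F$-finite domains of characteristic $p>0$ such that the induced extension of fraction fields $K\subseteq L$ is not separable, and let $e\ge1$. Then the only $\phi\in\mathrm{Hom}_R(R^{1/p^e},R)$ that extends to an element $\bar\phi\in\mathrm{Hom}_S(S^{1/p^e},S)$ (i.e. with $\bar\phi|_{R^{1/p^e}}=\phi$) is the zero map.
   Context: $R^{1/p^e}\subseteq S^{1/p^e}$ are the rings of $p^e$-th roots inside an algebraic closure of $L$. $F$-finite: Frobenius is finite. *)

theory Defs
  imports "HOL-Computational_Algebra.Polynomial"
begin

text \<open>All rings live inside one ambient field 'a (an algebraically closed field
  of characteristic p containing L). Subrings of it are automatically domains.\<close>

definition is_subring :: "'a::field set \<Rightarrow> bool" where
  "is_subring A \<longleftrightarrow> 0 \<in> A \<and> 1 \<in> A \<and>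
     (\<forall>x\<in>A. \<forall>y\<in>A. x + y \<in> A \<and> x - y \<in> A \<and> x * y \<in> A)"

definition frac_field :: "'a::field set \<Rightarrow> 'a set" where
  "frac_field A = {a / b | a b. a \<in> A \<and> b \<in> A \<and> b \<noteq> 0}"

definition module_finite :: "'a::field set \<Rightarrow> 'a set \<Rightarrow> bool" where
  "module_finite A B \<longleftrightarrow> (\<exists>G. finite G \<and> G \<subseteq> B \<and>
     B = {(\<Sum>g\<in>G. c g * g) | c. \<forall>g\<in>G. c g \<in> A})"

definition poly_over :: "'a::field set \<Rightarrow> 'a poly \<Rightarrow> bool" where
  "poly_over A f \<longleftrightarrow> (\<forall>i. coeff f i \<in> A)"

definition integral_over :: "'a::field set \<Rightarrow> 'a \<Rightarrow> bool" where
  "integral_over A x \<longleftrightarrow> (\<exists>f. lead_coeff f = 1 \<and> poly_over A f \<and> poly f x = 0)"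

definition normal_domain :: "'a::field set \<Rightarrow> bool" where
  "normal_domain A \<longleftrightarrow> is_subring A \<and>
     (\<forall>x\<in>frac_field A. integral_over A x \<longrightarrow> x \<in> A)"

text \<open>F-finite: the Frobenius map of A is finite, i.e. A is a finitely generated
  module over its image A^p.\<close>
definition F_finite :: "'a::field set \<Rightarrow> bool" where
  "F_finite A \<longleftrightarrow> module_finite ((\<lambda>r. r ^ CHAR('a)) ` A) A"

definition separable_elem :: "'a::field set \<Rightarrow> 'a \<Rightarrow> bool" where
  "separable_elem K y \<longleftrightarrow> (\<exists>f. f \<noteq> 0 \<and> poly_over K f \<and> poly f y = 0 \<and> rsquarefree f)"

definition separable_ext :: "'a::field set \<Rightarrow> 'a set \<Rightarrow> bool" where
  "separable_ext K L \<longleftrightarrow> (\<forall>y\<in>L. separable_elem K y)"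

definition root_ring :: "'a::field set \<Rightarrow> nat \<Rightarrow> 'a set" where
  "root_ring A e = {x. x ^ (CHAR('a) ^ e) \<in> A}"

definition hom_mod :: "'a::field set \<Rightarrow> 'a set \<Rightarrow> 'a set \<Rightarrow> ('a \<Rightarrow> 'a) set" where
  "hom_mod A M N = {f. (\<forall>x\<in>M. f x \<in> N) \<and>
     (\<forall>x\<in>M. \<forall>y\<in>M. f (x + y) = f x + f y) \<and>
     (\<forall>r\<in>A. \<forall>x\<in>M. f (r * x) = r * f x)}"

end

theory Submission
  imports Defs "HOL-Computational_Algebra.Primes"
begin


definition sf :: "'a::field set \<Rightarrow> bool" where
  "sf K \<longleftrightarrow> 0 \<in> K \<and> 1 \<in> K \<and> (\<forall>x\<in>K. \<forall>y\<in>K. x + y \<in> K \<and> x - y \<in> K \<and> x * y \<in> K)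
     \<and> (\<forall>x\<in>K. inverse x \<in> K)"

lemma sfD:
  assumes "sf K"
  shows "0 \<in> K" "1 \<in> K" "x \<in> K \<Longrightarrow> y \<in> K \<Longrightarrow> x + y \<in> K"
    "x \<in> K \<Longrightarrow> y \<in> K \<Longrightarrow> x - y \<in> K" "x \<in> K \<Longrightarrow> y \<in> K \<Longrightarrow> x * y \<in> K"
    "x \<in> K \<Longrightarrow> inverse x \<in> K" "x \<in> K \<Longrightarrow> y \<in> K \<Longrightarrow> x / y \<in> K"
    "x \<in> K \<Longrightarrow> - x \<in> K"
  using assms unfolding sf_def
  by (auto simp: divide_inverse)

lemma subringD:
  assumes "is_subring K"
  shows "0 \<in> K" "1 \<in> K" "x \<in> K \<Longrightarrow> y \<in> K \<Longrightarrow> x + y \<in> K"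
    "x \<in> K \<Longrightarrow> y \<in> K \<Longrightarrow> x - y \<in> K" "x \<in> K \<Longrightarrow> y \<in> K \<Longrightarrow> x * y \<in> K"
  using assms unfolding is_subring_def by auto

lemma subring_pow: "is_subring K \<Longrightarrow> x \<in> K \<Longrightarrow> x ^ n \<in> K"
  by (induction n) (auto intro: subringD)

lemma subring_sum: "is_subring K \<Longrightarrow> (\<And>i. i \<in> A \<Longrightarrow> f i \<in> K) \<Longrightarrow> sum f A \<in> K"
  by (induction A rule: infinite_finite_induct) (auto intro: subringD)

lemma sf_subring: "sf K \<Longrightarrow> is_subring K"
  unfolding is_subring_def sf_def by auto

lemma frac_sf:
  assumes R: "is_subring R"
  shows "sf (frac_field R)" "R \<subseteq> frac_field R"
proof -
  note D = subringD[OF R]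
  show "R \<subseteq> frac_field R"
  proof
    fix x assume "x \<in> R"
    thus "x \<in> frac_field R" unfolding frac_field_def using D(2) by (intro CollectI exI[of _ x] exI[of _ 1]) simp
  qed
  show "sf (frac_field R)"
    unfolding sf_def frac_field_def
  proof (intro conjI ballI)
    show "0 \<in> {a / b |a b. a \<in> R \<and> b \<in> R \<and> b \<noteq> 0}" using D(1,2) by (intro CollectI exI[of _ 0] exI[of _ 1]) simp
    show "1 \<in> {a / b |a b. a \<in> R \<and> b \<in> R \<and> b \<noteq> 0}" using D(2) by (intro CollectI exI[of _ 1] exI[of _ 1]) simp
  next
    fix x y assume "x \<in> {a / b |a b. a \<in> R \<and> b \<in> R \<and> b \<noteq> 0}" "y \<in> {a / b |a b. a \<in> R \<and> b \<in> R \<and> b \<noteq> 0}"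
    then obtain a b c d where x: "x = a / b" "a \<in> R" "b \<in> R" "b \<noteq> 0" and y: "y = c / d" "c \<in> R" "d \<in> R" "d \<noteq> 0"
      by blast
    have "x + y = (a*d + c*b) / (b*d)" using x y by (simp add: field_simps)
    moreover have "a*d + c*b \<in> R" "b * d \<in> R" "b*d \<noteq> 0" using x y D by auto
    ultimately show "x + y \<in> {a / b |a b. a \<in> R \<and> b \<in> R \<and> b \<noteq> 0}" by blast
    have "x - y = (a*d - c*b) / (b*d)" using x y by (simp add: field_simps)
    moreover have "a*d - c*b \<in> R" using x y D by auto
    ultimately show "x - y \<in> {a / b |a b. a \<in> R \<and> b \<in> R \<and> b \<noteq> 0}" using \<open>b*d \<in> R\<close> \<open>b*d\<noteq>0\<close> by blast
    have "x * y = (a*c) / (b*d)" using x y by (simp add: field_simps)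
    moreover have "a*c \<in> R" using x y D by auto
    ultimately show "x * y \<in> {a / b |a b. a \<in> R \<and> b \<in> R \<and> b \<noteq> 0}" using \<open>b*d \<in> R\<close> \<open>b*d\<noteq>0\<close> by blast
  next
    fix x assume "x \<in> {a / b |a b. a \<in> R \<and> b \<in> R \<and> b \<noteq> 0}"
    then obtain a b where x: "x = a / b" "a \<in> R" "b \<in> R" "b \<noteq> 0" by blast
    show "inverse x \<in> {a / b |a b. a \<in> R \<and> b \<in> R \<and> b \<noteq> 0}"
    proof (cases "a = 0")
      case True then have "inverse x = 0 / 1" using x by simp
      then show ?thesis using D(1,2) by (intro CollectI exI[of _ 0] exI[of _ 1]) simp
    next
      case False
      then have "inverse x = b / a" using x by simp
      then show ?thesis using x False by blast
    qed
  qed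
qed

lemma sf_sum: "sf K \<Longrightarrow> (\<And>i. i \<in> A \<Longrightarrow> f i \<in> K) \<Longrightarrow> sum f A \<in> K"
  by (intro subring_sum sf_subring)

lemma sf_of_nat: "sf K \<Longrightarrow> of_nat n \<in> K"
  by (induction n) (auto intro: sfD)

lemma po_add: "poly_over K p \<Longrightarrow> poly_over K q \<Longrightarrow> sf K \<Longrightarrow> poly_over K (p + q)"
  unfolding poly_over_def by (auto intro: sfD)
lemma po_diff: "poly_over K p \<Longrightarrow> poly_over K q \<Longrightarrow> sf K \<Longrightarrow> poly_over K (p - q)"
  unfolding poly_over_def by (auto intro: sfD)
lemma po_minus: "poly_over K p \<Longrightarrow> sf K \<Longrightarrow> poly_over K (- p)"
  unfolding poly_over_def by (auto intro: sfD)
lemma po_mult: "poly_over K p \<Longrightarrow> poly_over K q \<Longrightarrow> sf K \<Longrightarrow> poly_over K (p * q)"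
  unfolding poly_over_def coeff_mult by (auto intro!: sf_sum sfD)
lemma po_monom: "c \<in> K \<Longrightarrow> sf K \<Longrightarrow> poly_over K (monom c n)"
  unfolding poly_over_def by (auto simp: coeff_monom intro: sfD)
lemma po_one: "sf K \<Longrightarrow> poly_over K 1"
  unfolding poly_over_def by (auto simp: coeff_1 intro: sfD)
lemma po_zero: "sf K \<Longrightarrow> poly_over K 0"
  unfolding poly_over_def by (auto intro: sfD)
lemma po_pderiv: "poly_over K p \<Longrightarrow> sf K \<Longrightarrow> poly_over K (pderiv p)"
  unfolding poly_over_def coeff_pderiv by (auto intro!: sfD sf_of_nat)
lemma po_sum: "sf K \<Longrightarrow> (\<And>i. i \<in> A \<Longrightarrow> poly_over K (f i)) \<Longrightarrow> poly_over K (sum f A)"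
  unfolding poly_over_def coeff_sum by (auto intro!: sf_sum)

lemma po_divmod:
  assumes K: "sf K" and d: "poly_over K d" "d \<noteq> 0"
  shows "poly_over K f \<Longrightarrow> \<exists>q r. poly_over K q \<and> poly_over K r \<and> f = q * d + r \<and> (r = 0 \<or> degree r < degree d)"
proof (induction "degree f" arbitrary: f rule: less_induct)
  case (less f)
  show ?case
  proof (cases "f = 0 \<or> degree f < degree d")
    case True
    then show ?thesis using less.prems K by (intro exI[of _ 0] exI[of _ f]) (auto intro: po_zero)
  next
    case False
    then have f0: "f \<noteq> 0" and dl: "degree d \<le> degree f" by auto
    define c where "c = lead_coeff f / lead_coeff d"
    define k where "k = degree f - degree d"
    define f' where "f' = f - monom c k * d"
    have cK: "c \<in> K" unfolding c_def using less.prems d K unfolding poly_over_def by (auto intro: sfD)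
    have mK: "poly_over K (monom c k)" using cK K by (rule po_monom)
    have f'K: "poly_over K f'" unfolding f'_def using less.prems mK d K by (intro po_diff po_mult)
    have ld: "lead_coeff d \<noteq> 0" using d by simp
    have cz: "coeff f' n = 0" if "n \<ge> degree f" for n
    proof (cases "n = degree f")
      case True
      then show ?thesis unfolding f'_def c_def k_def using dl ld
        by (simp add: coeff_monom_mult)
    next
      case False
      then have "n > degree f" using that by simp
      then have "coeff f n = 0" "coeff d (n - k) = 0" unfolding k_def using dl
        by (auto intro!: coeff_eq_0)
      then show ?thesis unfolding f'_def by (simp add: coeff_monom_mult)
    qed
    show ?thesis
    proof (cases "f' = 0")
      case True
      then show ?thesis using mK K by (intro exI[of _ "monom c k"] exI[of _ 0]) (auto simp: f'_def intro: po_zero)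
    next
      case False
      then have "coeff f' (degree f') \<noteq> 0" by simp
      then have "degree f' < degree f" using cz by (meson not_le)
      from less.hyps[OF this f'K] obtain q r where qr: "poly_over K q" "poly_over K r" "f' = q * d + r" "r = 0 \<or> degree r < degree d"
        by blast
      have "f = (q + monom c k) * d + r" using qr(3) unfolding f'_def by (simp add: algebra_simps)
      then show ?thesis using qr mK K by (intro exI[of _ "q + monom c k"] exI[of _ r]) (auto intro: po_add)
    qed
  qed
qed



lemma pderiv_zero_of_min:
  assumes K: "sf K" and gK: "poly_over K g" and g0: "g \<noteq> 0" and gy: "poly g y = 0"
    and gmin: "\<And>h. poly_over K h \<Longrightarrow> h \<noteq> 0 \<Longrightarrow> poly h y = 0 \<Longrightarrow> degree g \<le> degree h"
    and nsq: "\<not> rsquarefree g"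
  shows "pderiv g = 0"
proof (rule ccontr)
  assume g'0: "pderiv g \<noteq> 0"
  define g' where "g' = pderiv g"
  have g'K: "poly_over K g'" unfolding g'_def using gK K by (rule po_pderiv)
  have "coeff g' (degree g') \<noteq> 0" using g'0 unfolding g'_def by simp
  then have "coeff g (Suc (degree g')) \<noteq> 0" unfolding g'_def coeff_pderiv by simp
  then have dg': "degree g' < degree g" using le_degree by fastforce
  define I where "I = {h. \<exists>u v. poly_over K u \<and> poly_over K v \<and> h = u * g + v * g'}"
  have g'I: "g' \<in> I" unfolding I_def using K by (intro CollectI exI[of _ 0] exI[of _ 1]) (auto intro: po_zero po_one)
  define P where "P k = (\<exists>h\<in>I. h \<noteq> 0 \<and> degree h = k)" for k
  have Pg': "P (degree g')" unfolding P_def using g'I g'0 g'_def by blast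
  define k where "k = (LEAST k. P k)"
  have Pk: "P k" unfolding k_def using Pg' by (rule LeastI)
  have kmin: "k \<le> degree h" if "h \<in> I" "h \<noteq> 0" for h
    unfolding k_def using that by (intro Least_le) (auto simp: P_def)
  obtain h where hI: "h \<in> I" and h0: "h \<noteq> 0" and dh: "degree h = k" using Pk unfolding P_def by blast
  obtain u v where uv: "poly_over K u" "poly_over K v" "h = u * g + v * g'" using hI unfolding I_def by blast
  have hK: "poly_over K h" unfolding uv(3) using uv gK g'K K by (intro po_add po_mult)
  obtain q r where qr: "poly_over K q" "poly_over K r" "g = q * h + r" "r = 0 \<or> degree r < degree h"
    using po_divmod[OF K hK h0 gK] by blast
  have "r = g - q * h" using qr(3) by simp
  also have "\<dots> = (1 - q * u) * g + (- (q * v)) * g'"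
    unfolding uv(3) by (simp add: algebra_simps)
  finally have req: "r = (1 - q * u) * g + (- (q * v)) * g'" .
  have p1: "poly_over K (1 - q * u)" by (rule po_diff[OF po_one[OF K] po_mult[OF qr(1) uv(1) K] K])
  have p2: "poly_over K (- (q * v))" by (rule po_minus[OF po_mult[OF qr(1) uv(2) K] K])
  have rI: "r \<in> I" unfolding I_def using req p1 p2 by blast
  have r0: "r = 0" using kmin[OF rI] qr(4) dh by fastforce
  have gqh: "g = q * h" using qr(3) r0 by simp
  have dhk: "degree h \<le> degree g'" using kmin[OF g'I g'0[folded g'_def]] dh by simp
  have "poly q y * poly h y = 0" using gy gqh by simp
  moreover have "poly h y \<noteq> 0"
  proof
    assume "poly h y = 0"
    from gmin[OF hK h0 this] dhk dg' show False by simp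
  qed
  ultimately have qy: "poly q y = 0" by simp
  have q0: "q \<noteq> 0" using g0 gqh by auto
  have "degree g \<le> degree q" using gmin[OF qr(1) q0 qy] .
  moreover have "degree g = degree q + degree h" using gqh q0 h0 by (simp add: degree_mult_eq)
  ultimately have dh0: "degree h = 0" by simp
  then obtain c where hc: "h = [:c:]" using degree_eq_zeroE by blast
  with h0 have c0: "c \<noteq> 0" by simp
  obtain a where "order a g \<noteq> 0 \<and> order a g \<noteq> 1" using nsq g0 unfolding rsquarefree_def by blast
  then have "[:-a, 1:] ^ 2 dvd g" using order_divides by fastforce
  then obtain m where gm: "g = [:-a, 1:] ^ 2 * m" by (elim dvdE)
  have ga: "poly g a = 0" using gm by simp
  have "pderiv g = [:-a, 1:] ^ 2 * pderiv m + m * pderiv ([:-a, 1:] ^ 2)"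
    unfolding gm by (rule pderiv_mult)
  also have "pderiv ([:-a, 1:] ^ 2) = smult 2 [:-a, 1:] * pderiv [:-a,1:]"
    using pderiv_power_Suc[of "[:-a, 1:]" 1] by (simp add: numeral_2_eq_2)
  finally have g'a: "poly g' a = 0" unfolding g'_def by simp
  have "poly h a = 0" using uv(3) ga g'a by simp
  then show False using hc c0 by simp
qed

definition spanK :: "'a::field set \<Rightarrow> 'a set \<Rightarrow> 'a set" where
  "spanK K G = {(\<Sum>g\<in>G. c g * g) | c. \<forall>g\<in>G. c g \<in> K}"

lemma dep:
  assumes K: "sf K"
  shows "finite G \<Longrightarrow> finite I \<Longrightarrow> card G < card I \<Longrightarrow> (\<forall>i\<in>I. v i \<in> spanK K G)
    \<Longrightarrow> \<exists>c. (\<forall>i\<in>I. c i \<in> K) \<and> (\<exists>i\<in>I. c i \<noteq> 0) \<and> (\<Sum>i\<in>I. c i * v i) = 0"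
proof (induction G arbitrary: I v rule: finite_induct)
  case empty
  then have "I \<noteq> {}" by auto
  moreover have "\<forall>i\<in>I. v i = 0" using empty.prems unfolding spanK_def by auto
  ultimately show ?case using K by (intro exI[of _ "\<lambda>_. 1"]) (auto intro: sfD)
next
  case (insert g G)
  have "\<forall>i\<in>I. \<exists>C. (\<forall>h\<in>insert g G. C h \<in> K) \<and> v i = (\<Sum>h\<in>insert g G. C h * h)"
    using insert.prems(3) unfolding spanK_def by blast
  then obtain C where C: "\<And>i. i \<in> I \<Longrightarrow> (\<forall>h\<in>insert g G. C i h \<in> K) \<and> v i = (\<Sum>h\<in>insert g G. C i h * h)"
    by metis
  define a where "a i = C i g" for i
  define w where "w i = (\<Sum>h\<in>G. C i h * h)" for i
  have vaw: "v i = a i * g + w i" if "i \<in> I" for i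
    using C[OF that] insert.hyps unfolding a_def w_def by simp
  have aK: "a i \<in> K" if "i \<in> I" for i using C[OF that] unfolding a_def by simp
  have wS: "w i \<in> spanK K G" if "i \<in> I" for i
    using C[OF that] unfolding w_def spanK_def by auto
  show ?case
  proof (cases "\<forall>i\<in>I. a i = 0")
    case True
    then have "\<forall>i\<in>I. v i \<in> spanK K G" using vaw wS by simp
    moreover have "card G < card I" using insert by simp
    ultimately show ?thesis using insert.IH[of I v] insert.prems by blast
  next
    case False
    then obtain i0 where i0: "i0 \<in> I" "a i0 \<noteq> 0" by blast
    define I' where "I' = I - {i0}"
    have cI': "card G < card I'" using insert i0 unfolding I'_def by (simp add: card_Diff_singleton)
    define u where "u i = w i - (a i / a i0) * w i0" for i
    have uS: "\<forall>i\<in>I'. u i \<in> spanK K G"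
    proof
      fix i assume "i \<in> I'"
      then have i: "i \<in> I" unfolding I'_def by simp
      have "u i = (\<Sum>h\<in>G. (C i h - (a i / a i0) * C i0 h) * h)"
        unfolding u_def w_def by (simp add: algebra_simps sum_subtractf sum_distrib_left)
      moreover have "\<forall>h\<in>G. C i h - (a i / a i0) * C i0 h \<in> K"
        using C[OF i] C[OF i0(1)] aK[OF i] aK[OF i0(1)] K by (auto intro!: sfD)
      ultimately show "u i \<in> spanK K G" unfolding spanK_def
        by (intro CollectI exI[of _ "\<lambda>h. C i h - (a i / a i0) * C i0 h"]) simp
    qed
    obtain d where d: "\<forall>i\<in>I'. d i \<in> K" "\<exists>i\<in>I'. d i \<noteq> 0" "(\<Sum>i\<in>I'. d i * u i) = 0"
      using insert.IH[OF _ cI' uS] insert.prems(1) unfolding I'_def by blast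
    define c where "c i = (if i = i0 then - (\<Sum>j\<in>I'. d j * a j) / a i0 else d i)" for i
    have uv: "u i = v i - (a i / a i0) * v i0" if "i \<in> I" for i
      using vaw[OF that] vaw[OF i0(1)] i0(2) unfolding u_def by (simp add: field_simps)
    have fin: "finite I'" using insert.prems(1) unfolding I'_def by simp
    have "(\<Sum>i\<in>I. c i * v i) = c i0 * v i0 + (\<Sum>i\<in>I'. c i * v i)"
      using insert.prems(1) i0(1) unfolding I'_def by (simp add: sum.remove)
    also have "(\<Sum>i\<in>I'. c i * v i) = (\<Sum>i\<in>I'. d i * v i)"
      unfolding c_def I'_def by (intro sum.cong) auto
    also have "c i0 * v i0 = - (\<Sum>j\<in>I'. d j * a j / a i0 * v i0)"
      unfolding c_def by (simp add: sum_divide_distrib sum_distrib_right)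
    also have "- (\<Sum>j\<in>I'. d j * a j / a i0 * v i0) + (\<Sum>i\<in>I'. d i * v i) = (\<Sum>i\<in>I'. d i * v i - d i * a i / a i0 * v i0)"
      by (simp add: sum_subtractf)
    also have "\<dots> = (\<Sum>i\<in>I'. d i * u i)"
      by (intro sum.cong refl) (simp add: uv I'_def algebra_simps)
    finally have s0: "(\<Sum>i\<in>I. c i * v i) = 0" using d(3) by simp
    have cK: "\<forall>i\<in>I. c i \<in> K"
      using d(1) aK i0 K unfolding c_def I'_def by (auto intro!: sfD sf_sum)
    have "\<exists>i\<in>I. c i \<noteq> 0"
    proof -
      obtain i where "i \<in> I'" "d i \<noteq> 0" using d(2) by blast
      then show ?thesis unfolding c_def I'_def by (intro bexI[of _ i]) auto
    qed
    then show ?thesis using s0 cK by blast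
  qed
qed



lemma coeff_monsum: "coeff (\<Sum>i\<le>N. monom (c i) i) j = (if j \<le> N then c j else 0)"
  by (simp add: coeff_sum coeff_monom)

lemma poly_monsum: "poly (\<Sum>i\<le>N. monom (c i) i) (x::'a::field) = (\<Sum>i\<le>N. c i * x ^ i)"
  unfolding poly_sum poly_monom ..

lemma degree_monsum: "degree (\<Sum>i\<le>N. monom (c i) i) \<le> N"
  by (rule degree_le) (simp add: coeff_monsum)

lemma algebraic:
  assumes R: "is_subring R" and S: "is_subring S" and RS: "R \<subseteq> S"
    and mf: "module_finite R S" and y: "y \<in> frac_field S"
  shows "\<exists>f. poly_over (frac_field R) f \<and> f \<noteq> 0 \<and> poly f y = 0"
proof -
  define K where "K = frac_field R"
  have K: "sf K" and RK: "R \<subseteq> K" unfolding K_def using frac_sf[OF R] by auto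
  obtain s t where st: "y = s / t" "s \<in> S" "t \<in> S" "t \<noteq> 0" using y unfolding frac_field_def by blast
  obtain G where G: "finite G" "G \<subseteq> S" "S = {(\<Sum>g\<in>G. c g * g) | c. \<forall>g\<in>G. c g \<in> R}"
    using mf unfolding module_finite_def by blast
  have SK: "S \<subseteq> spanK K G" unfolding spanK_def using G(3) RK by blast
  define N where "N = card G"
  define v where "v i = s ^ i * t ^ (N - i)" for i
  have vS: "\<forall>i\<in>{..N}. v i \<in> spanK K G"
    using SK st unfolding v_def by (auto intro!: subringD(5)[OF S] subring_pow[OF S])
  obtain c where c: "\<forall>i\<in>{..N}. c i \<in> K" "\<exists>i\<in>{..N}. c i \<noteq> 0" "(\<Sum>i\<le>N. c i * v i) = 0"
    using dep[OF K G(1) _ _ vS] unfolding N_def by auto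
  define f where "f = (\<Sum>i\<le>N. monom (c i) i)"
  have fK: "poly_over K f" unfolding poly_over_def f_def coeff_monsum using c(1) K by (auto intro: sfD)
  have f0: "f \<noteq> 0"
  proof
    assume "f = 0"
    then have z: "\<forall>j. coeff f j = 0" by simp
    obtain i where "i \<le> N" "c i \<noteq> 0" using c(2) by auto
    then show False using z[rule_format, of i] unfolding f_def coeff_monsum by simp
  qed
  have yt: "s = y * t" using st by simp
  have "t ^ N * poly f y = (\<Sum>i\<le>N. c i * (y ^ i * t ^ N))"
    unfolding f_def poly_monsum by (simp add: sum_distrib_left algebra_simps)
  also have "\<dots> = (\<Sum>i\<le>N. c i * v i)"
  proof (intro sum.cong refl)
    fix i assume "i \<in> {..N}"
    then have "t ^ N = t ^ i * t ^ (N - i)" by (simp flip: power_add)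
    then show "c i * (y ^ i * t ^ N) = c i * v i" unfolding v_def yt by (simp add: power_mult_distrib)
  qed
  finally have "poly f y = 0" using c(3) st(4) by simp
  then show ?thesis using fK f0 unfolding K_def by blast
qed

lemma common_denom:
  assumes R: "is_subring R"
  shows "finite A \<Longrightarrow> (\<forall>j\<in>A. f j \<in> frac_field R) \<Longrightarrow> \<exists>D\<in>R. D \<noteq> 0 \<and> (\<forall>j\<in>A. D * f j \<in> R)"
proof (induction A rule: finite_induct)
  case empty
  then show ?case using subringD(2)[OF R] by (intro bexI[of _ 1]) auto
next
  case (insert x A)
  then obtain D where D: "D \<in> R" "D \<noteq> 0" "\<forall>j\<in>A. D * f j \<in> R" by auto
  obtain a b where ab: "f x = a / b" "a \<in> R" "b \<in> R" "b \<noteq> 0" using insert.prems unfolding frac_field_def by auto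
  have "D * b * f j \<in> R" if "j \<in> insert x A" for j
  proof (cases "j = x")
    case True
    then have "D * b * f j = D * (b * (a / b))" using ab by (simp add: mult.assoc)
    also have "\<dots> = D * a" using ab by simp
    finally show ?thesis using D(1) ab(2) subringD(5)[OF R] by metis
  next
    case False
    have e1: "D * b * f j = b * (D * f j)" by simp
    have "D * f j \<in> R" using D(3) that False by auto
    then show ?thesis unfolding e1 using ab(3) subringD(5)[OF R] by blast
  qed
  moreover have "D * b \<in> R" "D * b \<noteq> 0" using D ab subringD(5)[OF R] by auto
  ultimately show ?case by blast
qed

lemma rr_add:
  assumes "is_subring A" "prime CHAR('a)" "x \<in> root_ring A e" "y \<in> root_ring A e"
  shows "(x::'a::field) + y \<in> root_ring A e"
  using assms unfolding root_ring_def by (simp add: freshmans_dream' subringD)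

lemma rr_mult:
  assumes "is_subring A" "x \<in> root_ring A e" "y \<in> root_ring A e"
  shows "(x::'a::field) * y \<in> root_ring A e"
  using assms unfolding root_ring_def by (simp add: power_mult_distrib subringD)

lemma rr_pow:
  assumes "is_subring A" "x \<in> root_ring A e"
  shows "(x::'a::field) ^ n \<in> root_ring A e"
  using assms unfolding root_ring_def by (simp add: subring_pow flip: power_mult) (metis mult.commute power_mult subring_pow)

lemma rr_sub:
  assumes "is_subring A" "prime CHAR('a)"
  shows "A \<subseteq> root_ring (A::'a::field set) e"
  using assms unfolding root_ring_def by (auto intro: subring_pow)

lemma rr_mono: "A \<subseteq> B \<Longrightarrow> root_ring A e \<subseteq> root_ring B e"
  unfolding root_ring_def by auto

lemma rr_zero: "prime CHAR('a) \<Longrightarrow> (0::'a::field) \<in> root_ring A e \<longleftrightarrow> 0 \<in> A"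
proof -
  assume "prime CHAR('a)"
  then have "CHAR('a) ^ e > 0" by (simp add: prime_gt_0_nat)
  then have z: "(0::'a) ^ (CHAR('a) ^ e) = 0" by (rule zero_power)
  show ?thesis unfolding root_ring_def by (simp only: mem_Collect_eq z)
qed

lemma hom_zero:
  assumes "\<psi> \<in> hom_mod A M N" "0 \<in> M"
  shows "\<psi> 0 = 0"
proof -
  have "\<psi> (0 + 0) = \<psi> 0 + \<psi> 0" using assms unfolding hom_mod_def by blast
  then show ?thesis by (metis add_cancel_right_right add_0)
qed

lemma hom_sum:
  assumes h: "\<psi> \<in> hom_mod A M N" and z: "0 \<in> M" and add: "\<And>x y. x \<in> M \<Longrightarrow> y \<in> M \<Longrightarrow> x + y \<in> M"
  shows "(\<And>i. i \<in> I \<Longrightarrow> f i \<in> M) \<Longrightarrow> \<psi> (sum f I) = (\<Sum>i\<in>I. \<psi> (f i))"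
proof (induction I rule: infinite_finite_induct)
  case (infinite I) then show ?case using hom_zero[OF h z] by simp
next
  case empty then show ?case using hom_zero[OF h z] by simp
next
  case (insert x F)
  have "sum f F \<in> M"
    using insert.prems by (induction F rule: infinite_finite_induct) (auto intro: add z)
  then have "\<psi> (f x + sum f F) = \<psi> (f x) + \<psi> (sum f F)"
    using h insert.prems unfolding hom_mod_def by blast
  then show ?case using insert by simp
qed



theorem proposition5p2:
  fixes R S :: "'a::field set" and e :: nat and \<phi> :: "'a \<Rightarrow> 'a"
  assumes char_p: "prime CHAR('a)"
    and alg_closed: "\<forall>f::'a poly. degree f \<ge> 1 \<longrightarrow> (\<exists>x. poly f x = 0)"
    and RS: "R \<subseteq> S"
    and normR: "normal_domain R" and normS: "normal_domain S"
    and FfinR: "F_finite R" and FfinS: "F_finite S"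
    and modfin: "module_finite R S"
    and insep: "\<not> separable_ext (frac_field R) (frac_field S)"
    and e: "e \<ge> 1"
    and phi: "\<phi> \<in> hom_mod R (root_ring R e) R"
    and ext: "\<exists>\<psi> \<in> hom_mod S (root_ring S e) S. \<forall>x\<in>root_ring R e. \<psi> x = \<phi> x"
  shows "\<forall>x\<in>root_ring R e. \<phi> x = 0"
proof -
  have Rs: "is_subring R" and Ss: "is_subring S" using normR normS unfolding normal_domain_def by auto
  define K where "K = frac_field R"
  have K: "sf K" and RK: "R \<subseteq> K" unfolding K_def using frac_sf[OF Rs] by auto
  define p where "p = CHAR('a)"
  have p2: "p \<ge> 2" unfolding p_def using char_p by (rule prime_ge_2_nat)
  define Rq where "Rq = root_ring R e"
  define Sq where "Sq = root_ring S e"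
  obtain y where y: "y \<in> frac_field S" and ns: "\<not> separable_elem K y"
    using insep unfolding separable_ext_def K_def by blast
  obtain s t where st: "y = s / t" "s \<in> S" "t \<in> S" "t \<noteq> 0" using y unfolding frac_field_def by blast
  have yt: "s = y * t" using st by simp
  obtain f0 where f0: "poly_over K f0" "f0 \<noteq> 0" "poly f0 y = 0"
    using algebraic[OF Rs Ss RS modfin y] unfolding K_def by blast
  define P where "P n = (\<exists>f. poly_over K f \<and> f \<noteq> 0 \<and> poly f y = 0 \<and> degree f = n)" for n
  define n where "n = (LEAST n. P n)"
  have "P n" unfolding n_def by (rule LeastI[of P "degree f0"]) (use f0 in \<open>auto simp: P_def\<close>)
  then obtain g where g: "poly_over K g" "g \<noteq> 0" "poly g y = 0" "degree g = n" unfolding P_def by blast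
  have gmin: "degree g \<le> degree h" if "poly_over K h" "h \<noteq> 0" "poly h y = 0" for h
    unfolding g(4) n_def by (rule Least_le) (use that in \<open>auto simp: P_def\<close>)
  have nsq: "\<not> rsquarefree g" using ns g unfolding separable_elem_def by blast
  have pd: "pderiv g = 0" by (rule pderiv_zero_of_min[OF K g(1,2,3) gmin nsq])
  have cz: "coeff g i = 0" if "\<not> p dvd i" for i
  proof (cases i)
    case 0 then show ?thesis using that by simp
  next
    case (Suc j)
    have "coeff (pderiv g) j = 0" using pd by simp
    then have "of_nat (Suc j) * coeff g (Suc j) = 0" unfolding coeff_pderiv .
    moreover have "of_nat (Suc j) \<noteq> (0::'a)" using that Suc of_nat_eq_0_iff_char_dvd[of "Suc j", where 'a='a] unfolding p_def by blast
    ultimately show ?thesis using Suc by simp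
  qed
  have n1: "n \<ge> 1"
  proof (rule ccontr)
    assume "\<not> n \<ge> 1"
    then have "degree g = 0" using g(4) by simp
    then obtain c where "g = [:c:]" using degree_eq_zeroE by blast
    then show False using g(2,3) by simp
  qed
  have "coeff g n \<noteq> 0" unfolding g(4)[symmetric] using g(2) by simp
  then have "p dvd n" using cz by blast
  then obtain m where nm: "n = p * m" by (elim dvdE)
  have m1: "m \<ge> 1" using n1 nm by (cases m) auto
  have mn: "m < n" using nm p2 m1 by simp
  define a where "a j = coeff g (p * j)" for j
  have aK: "a j \<in> K" for j using g(1) unfolding a_def poly_over_def by simp
  have am: "a m \<noteq> 0" unfolding a_def nm[symmetric] g(4)[symmetric] using g(2) by simp
  have gy: "poly g y = (\<Sum>j\<le>m. a j * (y ^ j) ^ p)"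
  proof -
    have "poly g y = (\<Sum>i\<le>n. coeff g i * y ^ i)" using g(4) by (simp add: poly_altdef)
    also have "\<dots> = (\<Sum>i\<in>(\<lambda>j. p * j) ` {..m}. coeff g i * y ^ i)"
    proof (rule sum.mono_neutral_right)
      show "finite {..n}" by simp
      show "(\<lambda>j. p * j) ` {..m} \<subseteq> {..n}" using nm by auto
      show "\<forall>i\<in>{..n} - (\<lambda>j. p * j) ` {..m}. coeff g i * y ^ i = 0"
      proof
        fix i assume i: "i \<in> {..n} - (\<lambda>j. p * j) ` {..m}"
        have "\<not> p dvd i"
        proof
          assume "p dvd i"
          then obtain j where "i = p * j" by (elim dvdE)
          moreover have "j \<le> m" using i \<open>i = p * j\<close> nm p2 by auto
          ultimately show False using i by auto
        qed
        then show "coeff g i * y ^ i = 0" using cz by simp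
      qed
    qed
    also have "\<dots> = (\<Sum>j\<le>m. coeff g (p * j) * y ^ (p * j))"
      using p2 by (subst sum.reindex) (auto simp: inj_on_def)
    also have "\<dots> = (\<Sum>j\<le>m. a j * (y ^ j) ^ p)"
      unfolding a_def by (simp add: mult.commute power_mult)
    finally show ?thesis .
  qed
  obtain D where D: "D \<in> R" "D \<noteq> 0" "\<forall>j\<in>{..m}. D * a j \<in> R"
    using common_denom[OF Rs, of "{..m}" a] aK unfolding K_def by auto
  have roots: "\<exists>z. z ^ p = x" for x :: 'a
  proof -
    define f :: "'a poly" where "f = [:-x:] + monom 1 p"
    have "degree f = p" unfolding f_def using p2 by (subst degree_add_eq_right) (auto simp: degree_monom_eq)
    then obtain z where "poly f z = 0" using alg_closed p2 by force
    then show ?thesis unfolding f_def by (auto simp: poly_monom)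
  qed
  define k where "k j = (SOME z. z ^ p = D * a j)" for j
  have kp: "k j ^ p = D * a j" for j unfolding k_def using roots by (rule someI_ex)
  have pe: "p ^ e = p * p ^ (e - 1)" using e by (cases e) auto
  have kR: "k j \<in> Rq" if "j \<le> m" for j
  proof -
    have "k j ^ (p ^ e) = (k j ^ p) ^ (p ^ (e - 1))" unfolding pe by (simp add: power_mult)
    also have "\<dots> \<in> R" unfolding kp using D(3) that by (auto intro: subring_pow[OF Rs])
    finally show ?thesis unfolding Rq_def root_ring_def p_def by simp
  qed
  have km: "k m \<noteq> 0" using kp[of m] D(2) am p2 by (auto simp: power_0_left)
  have rel0: "(\<Sum>j\<le>m. k j * y ^ j) = 0"
  proof -
    have "(\<Sum>j\<le>m. k j * y ^ j) ^ p = (\<Sum>j\<le>m. (k j * y ^ j) ^ p)"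
      unfolding p_def by (rule freshmans_dream_sum[OF char_p refl])
    also have "\<dots> = D * poly g y" unfolding gy
      by (simp add: power_mult_distrib kp sum_distrib_left mult.assoc)
    finally have "(\<Sum>j\<le>m. k j * y ^ j) ^ p = 0" using g(3) by simp
    then show ?thesis by simp
  qed
  define \<sigma> where "\<sigma> j = s ^ j * t ^ (m - j)" for j
  have \<sigma>S: "\<sigma> j \<in> S" for j unfolding \<sigma>_def using st by (auto intro!: subringD(5)[OF Ss] subring_pow[OF Ss])
  have \<sigma>y: "\<sigma> j = y ^ j * t ^ m" if "j \<le> m" for j
  proof -
    have "t ^ m = t ^ j * t ^ (m - j)" using that by (simp flip: power_add)
    then show ?thesis unfolding \<sigma>_def yt by (simp add: power_mult_distrib)
  qed
  obtain \<psi> where \<psi>: "\<psi> \<in> hom_mod S Sq S" "\<forall>x\<in>Rq. \<psi> x = \<phi> x" using ext unfolding Sq_def Rq_def by blast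
  have RqSq: "Rq \<subseteq> Sq" unfolding Rq_def Sq_def using RS by (rule rr_mono)
  have SSq: "S \<subseteq> Sq" unfolding Sq_def using Ss char_p by (rule rr_sub)
  have Sq0: "0 \<in> Sq" unfolding Sq_def using rr_zero[OF char_p] subringD(1)[OF Ss] by blast
  have Sqadd: "x + z \<in> Sq" if "x \<in> Sq" "z \<in> Sq" for x z
    using rr_add[OF Ss char_p] that unfolding Sq_def by blast
  have Sqmult: "x * z \<in> Sq" if "x \<in> Sq" "z \<in> Sq" for x z
    using rr_mult[OF Ss] that unfolding Sq_def by blast
  have Rqmult: "x * z \<in> Rq" if "x \<in> Rq" "z \<in> Rq" for x z
    using rr_mult[OF Rs] that unfolding Rq_def by blast
  have phiR: "\<phi> x \<in> R" if "x \<in> Rq" for x using phi that unfolding hom_mod_def Rq_def by blast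
  have key: "\<phi> (c * k m) = 0" if c: "c \<in> Rq" for c
  proof -
    have ckR: "c * k j \<in> Rq" if "j \<le> m" for j using Rqmult[OF c kR[OF that]] .
    have "(\<Sum>j\<le>m. \<sigma> j * (c * k j)) = c * t ^ m * (\<Sum>j\<le>m. k j * y ^ j)"
      by (simp add: sum_distrib_left \<sigma>y algebra_simps)
    also have "\<dots> = 0" using rel0 by simp
    finally have s0: "(\<Sum>j\<le>m. \<sigma> j * (c * k j)) = 0" .
    have mem: "\<sigma> j * (c * k j) \<in> Sq" if "j \<in> {..m}" for j
      using that by (intro Sqmult subsetD[OF SSq \<sigma>S] subsetD[OF RqSq ckR]) simp
    have "0 = \<psi> 0" using hom_zero[OF \<psi>(1) Sq0] by simp
    also have "\<dots> = (\<Sum>j\<le>m. \<psi> (\<sigma> j * (c * k j)))" unfolding s0[symmetric]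
      apply (rule hom_sum[OF \<psi>(1) Sq0])
       apply (blast intro: Sqadd)
      apply (erule mem)
      done
    also have "\<dots> = (\<Sum>j\<le>m. \<sigma> j * \<phi> (c * k j))"
    proof (intro sum.cong refl)
      fix j assume "j \<in> {..m}"
      then have j: "c * k j \<in> Rq" using ckR by simp
      then have "\<psi> (\<sigma> j * (c * k j)) = \<sigma> j * \<psi> (c * k j)"
        using \<psi>(1) \<sigma>S RqSq unfolding hom_mod_def by blast
      then show "\<psi> (\<sigma> j * (c * k j)) = \<sigma> j * \<phi> (c * k j)" using \<psi>(2) j by simp
    qed
    also have "\<dots> = t ^ m * (\<Sum>j\<le>m. \<phi> (c * k j) * y ^ j)"
      by (simp add: sum_distrib_left \<sigma>y algebra_simps)
    finally have hy: "(\<Sum>j\<le>m. \<phi> (c * k j) * y ^ j) = 0" using st(4) by simp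
    define h where "h = (\<Sum>j\<le>m. monom (\<phi> (c * k j)) j)"
    have hK: "poly_over K h" unfolding poly_over_def h_def coeff_monsum
      using phiR ckR RK K by (auto intro: sfD)
    have "poly h y = 0" unfolding h_def poly_monsum using hy .
    moreover have "degree h \<le> m" unfolding h_def by (rule degree_monsum)
    ultimately have "h = 0" using gmin[OF hK] g(4) mn by fastforce
    then have "coeff h m = 0" by simp
    then show ?thesis unfolding h_def coeff_monsum by simp
  qed
  show ?thesis
  proof
    fix x assume x: "x \<in> root_ring R e"
    then have xq: "x \<in> Rq" unfolding Rq_def .
    have pe1: "p ^ e \<ge> 1" using p2 by simp
    define c where "c = x * k m ^ (p ^ e - 1)"
    have cR: "c \<in> Rq" unfolding c_def using Rqmult[OF xq] rr_pow[OF Rs, of "k m" e] kR[of m] unfolding Rq_def by blast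
    obtain r where r: "p ^ e = Suc r" using pe1 by (cases "p ^ e") auto
    have "c * k m = x * (k m ^ r * k m)" unfolding c_def r by (simp add: mult.assoc)
    also have "k m ^ r * k m = k m ^ (p ^ e)" unfolding r by (rule power_Suc2[symmetric])
    finally have "c * k m = k m ^ (p ^ e) * x" by (simp add: mult.commute)
    moreover have "k m ^ (p ^ e) \<in> R" using kR[of m] unfolding Rq_def root_ring_def p_def by simp
    ultimately have "\<phi> (c * k m) = k m ^ (p ^ e) * \<phi> x" using phi xq unfolding hom_mod_def Rq_def by simp
    then have "k m ^ (p ^ e) * \<phi> x = 0" using key[OF cR] by simp
    then show "\<phi> x = 0" using km by simp
  qed
qed


end
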